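(* Let $q$, $T_q$, $P^2_q$, $P^3_q$, $\Delta$, $(\Delta,\mathrm{Id})$ and $(\mathrm{Id},\Delta)$ be as in the context. Then $(\Delta,\mathrm{Id}):P^2_q\to P^3_q$ and $(\mathrm{Id},\Delta):P^2_q\to P^3_q$ are algebra homomorphisms, and $\Delta$ is coassociative: $(\Delta,\mathrm{Id})\circ\Delta=(\mathrm{Id},\Delta)\circ\Delta$ as maps $T_q\to P^3_q$.
   Context: Fix $q\in\mathbb C$ with $|q|=1$ and a square root $q^{1/2}$; $q^{r/2}:=(q^{1/2})^r$. $\mathcal S(\mathbb Z^d,\mathbb C)$ denotes the Fréchet space of complex Schwartz sequences on $\mathbb Z^d$, $\delta^a$ the sequence equal to $1$ at $a$ and $0$ elsewhere. $T_q$ is $\mathcal S(\mathbb Z^2,\mathbb C)$ with continuous multiplication $\delta^{m,n}\delta^{k,\ell}=q^{-kn}\delta^{m+k,n+\ell}$; with $U=\delta^{1,0}$, $V=\delta^{0,1}$ one has $\delta^{m,n}=U^mV^n$ and $UV=qVU$. $P^2_q$ is $\mathcal S(\mathbb Z^4,\mathbb C)$ with continuous multiplication $\delta^{k_1,\ell_1,m_1,n_1}\delta^{k_2,\ell_2,m_2,n_2}=q^{\frac{k_2n_1}{2}-k_2\ell_1-\frac{m_1\ell_2}{2}-m_1n_2}\delta^{k_1+k_2,\ell_1+\ell_2,m_1+m_2,n_1+n_2}$; with $U_1=\delta^{1,0,0,0}$, $V_1=\delta^{0,1,0,0}$, $U_2=\delta^{0,0,1,0}$, $V_2=\delta^{0,0,0,1}$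 one has $\delta^{k,\ell,m,n}=U_1^kV_1^\ell U_2^mV_2^n$. $P^3_q$ is $\mathcal S(\mathbb Z^6,\mathbb C)$, where $\delta^{i,j,k,\ell,m,n}$ is written $U_1^iV_1^jU_2^kV_2^\ell U_3^mV_3^n$, equipped with the continuous associative multiplication (unit $\delta^{0,\dots,0}$, all generators invertible) determined by the relations: $U_aV_a=qV_aU_a$ for $a=1,2,3$; $U_1V_2=q^{-1/2}V_2U_1$, $U_2V_3=q^{-1/2}V_3U_2$, $V_1U_2=q^{1/2}U_2V_1$, $V_2U_3=q^{1/2}U_3V_2$; $U_3V_1=V_1U_3$, $V_3U_1=U_1V_3$; and all $U_a$ commute with each other and all $V_a$ commute with each other. $\Delta:T_q\to P^2_q$ is the continuous algebra homomorphism with $\Delta(U)=U_1U_2$, $\Delta(V)=V_1V_2$. Using the canonical vector space isomorphisms $P^2_q\cong T_q\hat\otimes T_q$ ($\delta^{k,\ell,m,n}\leftrightarrow\delta^{k,\ell}\otimes\delta^{m,n}$) and $P^3_q\cong T_q\hat\otimes T_q\hat\otimes T_q$ ($\delta^{i,j,k,\ell,m,n}\leftrightarrow\delta^{i,j}\otimes\delta^{k,\ell}\otimes\delta^{m,n}$), with $\hat\otimes$ the projective tensor product, $(\Delta,\mathrm{Id})$ and $(\mathrm{Id},\Delta)$ are the continuous linear maps $P^2_q\to P^3_q$ induced by $\Delta\hat\otimes\mathrm{Id}$ and $\mathrm{Id}\hat\otimes\Delta$ respectively. *)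

theory Defs
  imports "HOL-Analysis.Analysis"
begin

text \<open>Index types: Z^2 = int*int, Z^4 = Z^2 * Z^2 (so that P2 = T (x) T),
  Z^6 = Z^2 * Z^2 * Z^2 (so that P3 = T (x) T (x) T).  The root qh stands for q^(1/2),
  q = qh^2, and all phases q^(r/2) are written as qh powi r.\<close>

type_synonym idx2 = "int \<times> int"
type_synonym idx4 = "idx2 \<times> idx2"
type_synonym idx6 = "idx2 \<times> idx2 \<times> idx2"

definition schwartz :: "('a \<Rightarrow> real) \<Rightarrow> ('a \<Rightarrow> complex) set" where
  "schwartz w = {f. \<forall>N::nat. \<exists>C. \<forall>x. (1 + w x) ^ N * cmod (f x) \<le> C}"

fun w2 :: "idx2 \<Rightarrow> real" where
  "w2 (a, b) = real_of_int (\<bar>a\<bar> + \<bar>b\<bar>)"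

fun w4 :: "idx4 \<Rightarrow> real" where
  "w4 (x, y) = w2 x + w2 y"

fun w6 :: "idx6 \<Rightarrow> real" where
  "w6 (x, y, z) = w2 x + w2 y + w2 z"

abbreviation "S2 \<equiv> schwartz w2"
abbreviation "S4 \<equiv> schwartz w4"
abbreviation "S6 \<equiv> schwartz w6"

definition dlt :: "'a \<Rightarrow> 'a \<Rightarrow> complex" where
  "dlt a = (\<lambda>x. if x = a then 1 else 0)"

text \<open>Twisted convolution: delta^x * delta^y = qh powi (beta x y) * delta^(x+y).\<close>
definition twmul :: "complex \<Rightarrow> ('a::ab_group_add \<Rightarrow> 'a \<Rightarrow> int) \<Rightarrow>
    ('a \<Rightarrow> complex) \<Rightarrow> ('a \<Rightarrow> complex) \<Rightarrow> ('a \<Rightarrow> complex)" where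
  "twmul qh \<beta> f g = (\<lambda>z. \<Sum>\<^sub>\<infinity>x. f x * g (z - x) * qh powi (\<beta> x (z - x)))"

text \<open>T_q: delta^(m,n) delta^(k,l) = q^(-k n) delta^(m+k,n+l).\<close>
fun betaT :: "idx2 \<Rightarrow> idx2 \<Rightarrow> int" where
  "betaT (m, n) (k, l) = - 2 * k * n"

text \<open>P^2_q (exponent doubled): k2 n1/2 - k2 l1 - m1 l2/2 - n1 m2.\<close>
fun beta2 :: "idx4 \<Rightarrow> idx4 \<Rightarrow> int" where
  "beta2 ((k1, l1), (m1, n1)) ((k2, l2), (m2, n2)) =
     k2 * n1 - 2 * k2 * l1 - m1 * l2 - 2 * n1 * m2"

text \<open>P^3_q (exponent doubled), the cocycle determined by the stated relations with
  delta^(i,j,k,l,m,n) = U1^i V1^j U2^k V2^l U3^m V3^n.\<close>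
fun beta3 :: "idx6 \<Rightarrow> idx6 \<Rightarrow> int" where
  "beta3 ((i, j), (k, l), (m, n)) ((i', j'), (k', l'), (m', n')) =
     - 2 * j * i' - k * j' + l * i' - 2 * l * k' - m * l' + n * k' - 2 * n * m'"

definition mulT :: "complex \<Rightarrow> (idx2 \<Rightarrow> complex) \<Rightarrow> (idx2 \<Rightarrow> complex) \<Rightarrow> (idx2 \<Rightarrow> complex)" where
  "mulT qh = twmul qh betaT"
definition mulP2 :: "complex \<Rightarrow> (idx4 \<Rightarrow> complex) \<Rightarrow> (idx4 \<Rightarrow> complex) \<Rightarrow> (idx4 \<Rightarrow> complex)" where
  "mulP2 qh = twmul qh beta2"
definition mulP3 :: "complex \<Rightarrow> (idx6 \<Rightarrow> complex) \<Rightarrow> (idx6 \<Rightarrow> complex) \<Rightarrow> (idx6 \<Rightarrow> complex)" where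
  "mulP3 qh = twmul qh beta3"

text \<open>Coproduct: the continuous homomorphism with U |-> U1 U2, V |-> V1 V2.
  Since delta^(m,n) = U^m V^n, Delta(delta^(m,n)) = (U1U2)^m (V1V2)^n = q^(-mn/2) delta^((m,n),(m,n)).\<close>
fun Delta :: "complex \<Rightarrow> (idx2 \<Rightarrow> complex) \<Rightarrow> (idx4 \<Rightarrow> complex)" where
  "Delta qh f ((k, l), (m, n)) =
     (if (k, l) = (m, n) then qh powi (- (k * l)) * f (k, l) else 0)"

text \<open>Continuous extensions of L (x) Id and Id (x) L to the completed tensor products:
  F = sum F(a,b) delta^a (x) delta^b  is mapped to  sum F(a,b) L(delta^a) (x) delta^b, etc.\<close>
fun tensor_left :: "((idx2 \<Rightarrow> complex) \<Rightarrow> (idx4 \<Rightarrow> complex)) \<Rightarrow> (idx4 \<Rightarrow> complex) \<Rightarrow> (idx6 \<Rightarrow> complex)" where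
  "tensor_left L F (x1, x2, x3) = (\<Sum>\<^sub>\<infinity>a. L (dlt a) (x1, x2) * F (a, x3))"

fun tensor_right :: "((idx2 \<Rightarrow> complex) \<Rightarrow> (idx4 \<Rightarrow> complex)) \<Rightarrow> (idx4 \<Rightarrow> complex) \<Rightarrow> (idx6 \<Rightarrow> complex)" where
  "tensor_right L F (x1, x2, x3) = (\<Sum>\<^sub>\<infinity>b. F (x1, b) * L (dlt b) (x2, x3))"

definition DeltaId :: "complex \<Rightarrow> (idx4 \<Rightarrow> complex) \<Rightarrow> (idx6 \<Rightarrow> complex)" where
  "DeltaId qh = tensor_left (Delta qh)"
definition IdDelta :: "complex \<Rightarrow> (idx4 \<Rightarrow> complex) \<Rightarrow> (idx6 \<Rightarrow> complex)" where
  "IdDelta qh = tensor_right (Delta qh)"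

definition alg_hom ::
  "('a \<Rightarrow> complex) set \<Rightarrow> (('a \<Rightarrow> complex) \<Rightarrow> ('a \<Rightarrow> complex) \<Rightarrow> ('a \<Rightarrow> complex)) \<Rightarrow> ('a \<Rightarrow> complex) \<Rightarrow>
   ('b \<Rightarrow> complex) set \<Rightarrow> (('b \<Rightarrow> complex) \<Rightarrow> ('b \<Rightarrow> complex) \<Rightarrow> ('b \<Rightarrow> complex)) \<Rightarrow> ('b \<Rightarrow> complex) \<Rightarrow>
   (('a \<Rightarrow> complex) \<Rightarrow> ('b \<Rightarrow> complex)) \<Rightarrow> bool" where
  "alg_hom SA mulA oneA SB mulB oneB \<phi> \<longleftrightarrow>
     (\<forall>f\<in>SA. \<phi> f \<in> SB) \<and>
     (\<forall>f\<in>SA. \<forall>g\<in>SA. \<phi> (\<lambda>x. f x + g x) = (\<lambda>y. \<phi> f y + \<phi> g y)) \<and>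
     (\<forall>c. \<forall>f\<in>SA. \<phi> (\<lambda>x. c * f x) = (\<lambda>y. c * \<phi> f y)) \<and>
     (\<forall>f\<in>SA. \<forall>g\<in>SA. \<phi> (mulA f g) = mulB (\<phi> f) (\<phi> g)) \<and>
     \<phi> oneA = oneB"

end

theory Submission
  imports Defs
begin

fun phi :: "idx2 \<Rightarrow> int" where "phi (k, l) = k * l"

lemma infsum_single':
  fixes f :: "'a \<Rightarrow> complex"
  assumes "\<And>a. a \<noteq> b \<Longrightarrow> f a = 0"
  shows "infsum f UNIV = f b"
proof -
  have "infsum f UNIV = infsum f {b}"
    by (rule infsum_cong_neutral) (use assms in auto)
  then show ?thesis by simp
qed

lemma Delta_dlt: "Delta qh (dlt a) (x1, x2) = (if a = x1 \<and> x1 = x2 then qh powi (- phi x1) else 0)"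
  by (cases x1; cases x2) (auto simp: dlt_def)

lemma DeltaId_eq:
  "DeltaId qh F (x1, x2, x3) = (if x1 = x2 then qh powi (- phi x1) * F (x1, x3) else 0)"
  unfolding DeltaId_def tensor_left.simps Delta_dlt
  by (subst infsum_single'[where b = x1]) auto

lemma IdDelta_eq:
  "IdDelta qh F (x1, x2, x3) = (if x2 = x3 then qh powi (- phi x2) * F (x1, x2) else 0)"
  unfolding IdDelta_def tensor_right.simps Delta_dlt
  by (subst infsum_single'[where b = x2]) auto

lemma DeltaId_fun:
  "DeltaId qh F = (\<lambda>(x1, x2, x3). if x1 = x2 then qh powi (- phi x1) * F (x1, x3) else 0)"
  by (auto simp: DeltaId_eq)

lemma IdDelta_fun:
  "IdDelta qh F = (\<lambda>(x1, x2, x3). if x2 = x3 then qh powi (- phi x2) * F (x1, x2) else 0)"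
  by (auto simp: IdDelta_eq)

lemma powi_comb:
  fixes qh :: complex
  assumes "qh \<noteq> 0" "a + b + c = d + e"
  shows "qh powi a * qh powi b * qh powi c = qh powi d * qh powi e"
  using assms by (simp add: power_int_add[symmetric])

lemma cocL:
  fixes qh :: complex
  assumes "qh \<noteq> 0"
  shows "qh powi (- phi a) * qh powi (- phi a2) * qh powi (beta3 (a, a, b) (a2, a2, c))
       = qh powi (- phi (a + a2)) * qh powi (beta2 (a, b) (a2, c))"
  by (intro powi_comb[OF assms]) (cases a; cases a2; cases b; cases c; simp add: algebra_simps)

lemma cocR:
  fixes qh :: complex
  assumes "qh \<noteq> 0"
  shows "qh powi (- phi b) * qh powi (- phi c) * qh powi (beta3 (a, b, b) (a2, c, c))
       = qh powi (- phi (b + c)) * qh powi (beta2 (a, b) (a2, c))"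
  by (intro powi_comb[OF assms]) (cases a; cases a2; cases b; cases c; simp add: algebra_simps)


lemma DeltaId_mul:
  fixes qh :: complex
  assumes q0: "qh \<noteq> 0"
  shows "DeltaId qh (mulP2 qh f g) = mulP3 qh (DeltaId qh f) (DeltaId qh g)"
proof (rule ext, clarify)
  fix z1 z2 z3 :: idx2
  define S where "S = (\<lambda>x. DeltaId qh f x * DeltaId qh g ((z1, z2, z3) - x) * qh powi beta3 x ((z1, z2, z3) - x))"
  have R: "mulP3 qh (DeltaId qh f) (DeltaId qh g) (z1, z2, z3) = infsum S UNIV"
    unfolding mulP3_def twmul_def S_def by simp
  show "DeltaId qh (mulP2 qh f g) (z1, z2, z3) = mulP3 qh (DeltaId qh f) (DeltaId qh g) (z1, z2, z3)"
  proof (cases "z1 = z2")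
    case False
    have "infsum S UNIV = 0"
    proof (rule infsum_0)
      fix x :: idx6
      obtain y1 y2 y3 where x: "x = (y1, y2, y3)" by (cases x) auto
      show "S x = 0" using False unfolding S_def x by (simp add: DeltaId_eq)
    qed
    then show ?thesis using False R by (simp add: DeltaId_eq)
  next
    case True
    define e :: "idx4 \<Rightarrow> idx6" where "e = (\<lambda>(a, c). (a, a, c))"
    have inj: "inj e" unfolding e_def by (auto simp: inj_def)
    have "infsum S UNIV = infsum S (range e)"
    proof (rule infsum_cong_neutral)
      fix x :: idx6 assume "x \<in> UNIV - range e"
      moreover obtain y1 y2 y3 where x: "x = (y1, y2, y3)" by (cases x) auto
      ultimately have "y1 \<noteq> y2" unfolding e_def by auto
      then show "S x = 0" unfolding S_def x by (simp add: DeltaId_eq)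
    qed auto
    also have "\<dots> = infsum (S \<circ> e) UNIV" by (rule infsum_reindex[OF inj_on_subset[OF inj]]) auto
    also have "S \<circ> e = (\<lambda>x. qh powi (- phi z1) * (f x * g ((z1, z3) - x) * qh powi beta2 x ((z1, z3) - x)))"
    proof
      fix x :: idx4
      obtain a c where x: "x = (a, c)" by (cases x) auto
      have co: "qh powi (- phi a) * qh powi (- phi (z1 - a)) * qh powi (beta3 (a, a, c) (z1 - a, z1 - a, z3 - c))
       = qh powi (- phi z1) * qh powi (beta2 (a, c) (z1 - a, z3 - c))"
        using cocL[OF q0, of a "z1 - a" c "z3 - c"] by simp
      have "(S \<circ> e) x = (qh powi (- phi a) * qh powi (- phi (z1 - a)) * qh powi (beta3 (a, a, c) (z1 - a, z1 - a, z3 - c)))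
              * (f (a, c) * g (z1 - a, z3 - c))"
        unfolding S_def e_def x using True by (simp add: DeltaId_eq mult_ac)
      also have "\<dots> = qh powi (- phi z1) * (f x * g ((z1, z3) - x) * qh powi beta2 x ((z1, z3) - x))"
        unfolding co x by (simp add: mult_ac)
      finally show "(S \<circ> e) x = qh powi (- phi z1) * (f x * g ((z1, z3) - x) * qh powi beta2 x ((z1, z3) - x))" .
    qed
    also have "infsum \<dots> UNIV = qh powi (- phi z1) * mulP2 qh f g (z1, z3)"
      unfolding mulP2_def twmul_def by (rule infsum_cmult_right')
    finally show ?thesis using True R by (simp add: DeltaId_eq)
  qed
qed


lemma IdDelta_mul:
  fixes qh :: complex
  assumes q0: "qh \<noteq> 0"
  shows "IdDelta qh (mulP2 qh f g) = mulP3 qh (IdDelta qh f) (IdDelta qh g)"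
proof (rule ext, clarify)
  fix z1 z2 z3 :: idx2
  define S where "S = (\<lambda>x. IdDelta qh f x * IdDelta qh g ((z1, z2, z3) - x) * qh powi beta3 x ((z1, z2, z3) - x))"
  have R: "mulP3 qh (IdDelta qh f) (IdDelta qh g) (z1, z2, z3) = infsum S UNIV"
    unfolding mulP3_def twmul_def S_def by simp
  show "IdDelta qh (mulP2 qh f g) (z1, z2, z3) = mulP3 qh (IdDelta qh f) (IdDelta qh g) (z1, z2, z3)"
  proof (cases "z2 = z3")
    case False
    have "infsum S UNIV = 0"
    proof (rule infsum_0)
      fix x :: idx6
      obtain y1 y2 y3 where x: "x = (y1, y2, y3)" by (cases x) auto
      show "S x = 0" using False unfolding S_def x by (simp add: IdDelta_eq)
    qed
    then show ?thesis using False R by (simp add: IdDelta_eq)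
  next
    case True
    define e :: "idx4 \<Rightarrow> idx6" where "e = (\<lambda>(a, b). (a, b, b))"
    have inj: "inj e" unfolding e_def by (auto simp: inj_def)
    have "infsum S UNIV = infsum S (range e)"
    proof (rule infsum_cong_neutral)
      fix x :: idx6 assume "x \<in> UNIV - range e"
      moreover obtain y1 y2 y3 where x: "x = (y1, y2, y3)" by (cases x) auto
      ultimately have "y2 \<noteq> y3" unfolding e_def by auto
      then show "S x = 0" unfolding S_def x by (simp add: IdDelta_eq)
    qed auto
    also have "\<dots> = infsum (S \<circ> e) UNIV" by (rule infsum_reindex[OF inj_on_subset[OF inj]]) auto
    also have "S \<circ> e = (\<lambda>x. qh powi (- phi z2) * (f x * g ((z1, z2) - x) * qh powi beta2 x ((z1, z2) - x)))"
    proof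
      fix x :: idx4
      obtain a b where x: "x = (a, b)" by (cases x) auto
      have co: "qh powi (- phi b) * qh powi (- phi (z2 - b)) * qh powi (beta3 (a, b, b) (z1 - a, z2 - b, z2 - b))
       = qh powi (- phi z2) * qh powi (beta2 (a, b) (z1 - a, z2 - b))"
        using cocR[OF q0, of b "z2 - b" a "z1 - a"] by simp
      have "(S \<circ> e) x = (qh powi (- phi b) * qh powi (- phi (z2 - b)) * qh powi (beta3 (a, b, b) (z1 - a, z2 - b, z2 - b)))
              * (f (a, b) * g (z1 - a, z2 - b))"
        unfolding S_def e_def x using True by (simp add: IdDelta_eq mult_ac)
      also have "\<dots> = qh powi (- phi z2) * (f x * g ((z1, z2) - x) * qh powi beta2 x ((z1, z2) - x))"
        unfolding co x by (simp add: mult_ac)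
      finally show "(S \<circ> e) x = qh powi (- phi z2) * (f x * g ((z1, z2) - x) * qh powi beta2 x ((z1, z2) - x))" .
    qed
    also have "infsum \<dots> UNIV = qh powi (- phi z2) * mulP2 qh f g (z1, z2)"
      unfolding mulP2_def twmul_def by (rule infsum_cmult_right')
    finally show ?thesis using True R by (simp add: IdDelta_eq)
  qed
qed

lemma w2_nonneg: "w2 x \<ge> 0"
  by (cases x) auto

lemma cmod_powi: "cmod qh = 1 \<Longrightarrow> cmod (qh powi k) = 1"
  by (simp add: norm_power_int)

lemma schwartz_transfer:
  assumes F: "F \<in> S4"
    and H: "\<And>x. G x \<noteq> 0 \<Longrightarrow> \<exists>y. w6 x \<le> 2 * w4 y \<and> cmod (G x) \<le> cmod (F y)"
  shows "G \<in> S6"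
  unfolding schwartz_def
proof (clarify)
  fix N :: nat
  obtain C where C: "\<And>x. (1 + w4 x) ^ N * cmod (F x) \<le> C"
    using F unfolding schwartz_def by blast
  have w4n: "w4 y \<ge> 0" for y by (cases y) (auto intro: add_nonneg_nonneg w2_nonneg)
  have w6n: "w6 y \<ge> 0" for y by (cases y) (auto intro: add_nonneg_nonneg w2_nonneg)
  show "\<exists>C. \<forall>x. (1 + w6 x) ^ N * cmod (G x) \<le> C"
  proof (intro exI allI)
    fix x
    have C0: "0 \<le> C" using C[of x] w4n[of x]
      by (meson order_trans mult_nonneg_nonneg norm_ge_zero zero_le_power add_nonneg_nonneg zero_le_one)
    show "(1 + w6 x) ^ N * cmod (G x) \<le> 2 ^ N * C"
    proof (cases "G x = 0")
      case True then show ?thesis using C0 by simp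
    next
      case False
    obtain y where y: "w6 x \<le> 2 * w4 y" "cmod (G x) \<le> cmod (F y)" using H[OF False] by blast
    have "(1 + w6 x) ^ N * cmod (G x) \<le> (2 * (1 + w4 y)) ^ N * cmod (F y)"
      by (intro mult_mono power_mono) (use y w6n w4n in auto)
    also have "\<dots> = 2 ^ N * ((1 + w4 y) ^ N * cmod (F y))" by (simp only: power_mult_distrib mult.assoc)
    also have "\<dots> \<le> 2 ^ N * C" by (intro mult_left_mono C) auto
    finally show "(1 + w6 x) ^ N * cmod (G x) \<le> 2 ^ N * C" .
    qed
  qed
qed

lemma DeltaId_S:
  assumes q: "cmod qh = 1" and F: "F \<in> S4"
  shows "DeltaId qh F \<in> S6"
proof (rule schwartz_transfer[OF F])
  fix x :: idx6
  obtain y1 y2 y3 where x: "x = (y1, y2, y3)" by (cases x) auto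
  assume nz: "DeltaId qh F x \<noteq> 0"
  show "\<exists>y. w6 x \<le> 2 * w4 y \<and> cmod (DeltaId qh F x) \<le> cmod (F y)"
  proof (cases "y1 = y2")
    case True
    then show ?thesis using w2_nonneg[of y3]
      by (intro exI[of _ "(y1, y3)"]) (simp add: x DeltaId_eq norm_mult cmod_powi[OF q])
  next
    case False
    then show ?thesis using nz by (simp add: x DeltaId_eq)
  qed
qed

lemma IdDelta_S:
  assumes q: "cmod qh = 1" and F: "F \<in> S4"
  shows "IdDelta qh F \<in> S6"
proof (rule schwartz_transfer[OF F])
  fix x :: idx6
  obtain y1 y2 y3 where x: "x = (y1, y2, y3)" by (cases x) auto
  assume nz: "IdDelta qh F x \<noteq> 0"
  show "\<exists>y. w6 x \<le> 2 * w4 y \<and> cmod (IdDelta qh F x) \<le> cmod (F y)"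
  proof (cases "y2 = y3")
    case True
    then show ?thesis using w2_nonneg[of y1]
      by (intro exI[of _ "(y1, y2)"]) (simp add: x IdDelta_eq norm_mult cmod_powi[OF q])
  next
    case False
    then show ?thesis using nz by (simp add: x IdDelta_eq)
  qed
qed

theorem mainTheorem2:
  fixes qh :: complex
  assumes "cmod qh = 1"
  shows "alg_hom S4 (mulP2 qh) (dlt 0) S6 (mulP3 qh) (dlt 0) (DeltaId qh)
       \<and> alg_hom S4 (mulP2 qh) (dlt 0) S6 (mulP3 qh) (dlt 0) (IdDelta qh)
       \<and> (\<forall>f\<in>S2. DeltaId qh (Delta qh f) = IdDelta qh (Delta qh f))"
proof -
  have q0: "qh \<noteq> 0" using assms by auto
  have A: "alg_hom S4 (mulP2 qh) (dlt 0) S6 (mulP3 qh) (dlt 0) (DeltaId qh)"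
    unfolding alg_hom_def
    apply (intro conjI ballI allI)
        apply (simp add: DeltaId_S[OF assms])
       apply (auto simp: DeltaId_fun algebra_simps fun_eq_iff)[2]
     apply (simp add: DeltaId_mul[OF q0])
    apply (auto simp: DeltaId_fun dlt_def zero_prod_def fun_eq_iff)
    done
  have B: "alg_hom S4 (mulP2 qh) (dlt 0) S6 (mulP3 qh) (dlt 0) (IdDelta qh)"
    unfolding alg_hom_def
    apply (intro conjI ballI allI)
        apply (simp add: IdDelta_S[OF assms])
       apply (auto simp: IdDelta_fun algebra_simps fun_eq_iff)[2]
     apply (simp add: IdDelta_mul[OF q0])
    apply (auto simp: IdDelta_fun dlt_def zero_prod_def fun_eq_iff)
    done
  have C: "DeltaId qh (Delta qh f) = IdDelta qh (Delta qh f)" for f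
  proof (rule ext, clarify)
    fix x1 x2 x3 :: idx2
    show "DeltaId qh (Delta qh f) (x1, x2, x3) = IdDelta qh (Delta qh f) (x1, x2, x3)"
      by (cases x1; cases x2; cases x3) (auto simp: DeltaId_eq IdDelta_eq)
  qed
  show ?thesis using A B C by blast
qed

end
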